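(* Suppose the AA1 policy is applied at all times (in discrete time). If $$L_{AA1}:=\max_{\pi\in[0,1]}|f_1(0,\pi)-f_0(0,\pi)|<1,$$ then $|f_A(\pi,\pi')-f_B(\pi,\pi')|\le L_{AA1}|\pi-\pi'|$ for all $\pi,\pi'\in[0,1]$, and hence $|\pi_t(1|A)-\pi_t(1|B)|\to0$ for all initial profiles (society equalizes).
   Context: Two groups $A,B$; $\neg j$ is the group other than $j$. At time $t$ group $j$ has qualification profile $\pi_t(1|j)\in[0,1]$, $\pi_t(0|j)=1-\pi_t(1|j)$. Selection rates of a policy $\tau$: $\beta_t(v;j)=\tau(v;j)\pi_t(v|j)$. Dynamics: continuously differentiable $f_0,f_1:[0,1]^2\to[0,1]$, discrete time update $\pi_{t+1}(1|j)=\pi_t(1|j)f_1(\beta_t(0;j),\beta_t(1;j))+(1-\pi_t(1|j))f_0(\beta_t(0;j),\beta_t(1;j))$. Group $j$ is advantaged at time $t$ if $\pi_t(1|j)\ge\pi_t(1|\neg j)$. The AA1 policy with respect to advantaged $j$ is $\tau(1;j)=\pi_t(1|\neg j)/\pi_t(1|j)$, $\tau(0;j)=0$, $\tau(1;\neg j)=1$, $\tau(0;\neg j)=0$, i.e. selection rates $\beta_t(0;j)=\beta_t(0;\neg j)=0$, $\beta_t(1;j)=\beta_t(1;\neg j)=\pi_t(1|\neg j)$ (the policy is defined through these rates if a denominator vanishes). "Applying AA1 at all times" means at every $t$ AA1 is used with respect to the group advantaged at time $t$. Writing $\pi=\pi_t(1|A)$, $\pi'=\pi_t(1|B)$, the resulting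 joint update is $\pi_{t+1}(1|A)=f_A(\pi,\pi')$, $\pi_{t+1}(1|B)=f_B(\pi,\pi')$. *)

theory Defs
  imports "HOL-Analysis.Analysis"
begin

definition C1_on :: "(real \<times> real) set \<Rightarrow> (real \<times> real \<Rightarrow> real) \<Rightarrow> bool" where
  "C1_on S g \<longleftrightarrow> (\<exists>D :: real \<times> real \<Rightarrow> (real \<times> real) \<Rightarrow>\<^sub>L real.
      (\<forall>x\<in>S. (g has_derivative blinfun_apply (D x)) (at x within S)) \<and> continuous_on S D)"

text \<open>One-step qualification update of a group with profile p under selection rates
  b0 = beta(0;j), b1 = beta(1;j).\<close>
definition upd :: "(real \<times> real \<Rightarrow> real) \<Rightarrow> (real \<times> real \<Rightarrow> real) \<Rightarrow> real \<Rightarrow> real \<Rightarrow> real \<Rightarrow> real" where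
  "upd f0 f1 p b0 b1 = p * f1 (b0, b1) + (1 - p) * f0 (b0, b1)"

text \<open>AA1 selection rate of qualified individuals (the same in both groups): the
  qualification profile of the disadvantaged group. Here p = pi(1|A), q = pi(1|B);
  A is advantaged iff p >= q.\<close>
definition aa1_rate1 :: "real \<Rightarrow> real \<Rightarrow> real" where
  "aa1_rate1 p q = (if p \<ge> q then q else p)"

definition fA :: "(real \<times> real \<Rightarrow> real) \<Rightarrow> (real \<times> real \<Rightarrow> real) \<Rightarrow> real \<Rightarrow> real \<Rightarrow> real" where
  "fA f0 f1 p q = upd f0 f1 p 0 (aa1_rate1 p q)"

definition fB :: "(real \<times> real \<Rightarrow> real) \<Rightarrow> (real \<times> real \<Rightarrow> real) \<Rightarrow> real \<Rightarrow> real \<Rightarrow> real" where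
  "fB f0 f1 p q = upd f0 f1 q 0 (aa1_rate1 p q)"

primrec aa1_traj :: "(real \<times> real \<Rightarrow> real) \<Rightarrow> (real \<times> real \<Rightarrow> real) \<Rightarrow> real \<Rightarrow> real \<Rightarrow> nat \<Rightarrow> real \<times> real" where
  "aa1_traj f0 f1 p0 q0 0 = (p0, q0)"
| "aa1_traj f0 f1 p0 q0 (Suc t) =
     (let (p, q) = aa1_traj f0 f1 p0 q0 t in (fA f0 f1 p q, fB f0 f1 p q))"

text \<open>L_AA1 = max over pi in [0,1] of |f1(0,pi) - f0(0,pi)| (a maximum by continuity).\<close>
definition L_AA1 :: "(real \<times> real \<Rightarrow> real) \<Rightarrow> (real \<times> real \<Rightarrow> real) \<Rightarrow> real" where
  "L_AA1 f0 f1 = (SUP p\<in>{0..1}. \<bar>f1 (0, p) - f0 (0, p)\<bar>)"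

end

theory Submission
  imports Defs
begin

lemma diff_formula: "fA f0 f1 p q - fB f0 f1 p q = (p - q) * (f1 (0, aa1_rate1 p q) - f0 (0, aa1_rate1 p q))"
  unfolding fA_def fB_def upd_def by (simp add: algebra_simps)

lemma rate_in: "p \<in> {0..1} \<Longrightarrow> q \<in> {0..1} \<Longrightarrow> aa1_rate1 p q \<in> {0..(1::real)}"
  unfolding aa1_rate1_def by auto

theorem mainTheorem4:
  fixes f0 f1 :: "real \<times> real \<Rightarrow> real"
  assumes C1_0: "C1_on ({0..1} \<times> {0..1}) f0"
    and C1_1: "C1_on ({0..1} \<times> {0..1}) f1"
    and range0: "\<forall>x\<in>{0..1} \<times> {0..1}. f0 x \<in> {0..1}"
    and range1: "\<forall>x\<in>{0..1} \<times> {0..1}. f1 x \<in> {0..1}"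
    and L: "L_AA1 f0 f1 < 1"
  shows "(\<forall>p\<in>{0..1}. \<forall>q\<in>{0..1}.
            \<bar>fA f0 f1 p q - fB f0 f1 p q\<bar> \<le> L_AA1 f0 f1 * \<bar>p - q\<bar>)
       \<and> (\<forall>p0\<in>{0..1}. \<forall>q0\<in>{0..1}.
            (\<lambda>t. \<bar>fst (aa1_traj f0 f1 p0 q0 t) - snd (aa1_traj f0 f1 p0 q0 t)\<bar>) \<longlonglongrightarrow> 0)"
proof -
  let ?L = "L_AA1 f0 f1"
  have bdd: "bdd_above ((\<lambda>p. \<bar>f1 (0, p) - f0 (0, p)\<bar>) ` {0..1})"
  proof (rule bdd_aboveI2)
    fix p :: real assume "p \<in> {0..1}"
    then have "(0::real,p) \<in> {0..1} \<times> {0..(1::real)}" by simp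
    then have "f0 (0,p) \<in> {0..1}" "f1 (0,p) \<in> {0..1}" using range0 range1 by auto
    then show "\<bar>f1 (0, p) - f0 (0, p)\<bar> \<le> 1" by auto
  qed
  have up: "\<bar>f1 (0, r) - f0 (0, r)\<bar> \<le> ?L" if "r \<in> {0..1}" for r
    unfolding L_AA1_def using cSUP_upper[OF that bdd] .
  have L0: "0 \<le> ?L" using up[of 0] by (meson abs_ge_zero atLeastAtMost_iff order_trans zero_le_one order_refl)
  have part1: "\<bar>fA f0 f1 p q - fB f0 f1 p q\<bar> \<le> ?L * \<bar>p - q\<bar>" if "p \<in> {0..1}" "q \<in> {0..1}" for p q
  proof -
    have "\<bar>fA f0 f1 p q - fB f0 f1 p q\<bar> = \<bar>p - q\<bar> * \<bar>f1 (0, aa1_rate1 p q) - f0 (0, aa1_rate1 p q)\<bar>"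
      by (simp add: diff_formula abs_mult)
    also have "\<dots> \<le> \<bar>p - q\<bar> * ?L"
      using up[OF rate_in[OF that]] by (simp add: mult_left_mono)
    finally show ?thesis by (simp add: mult.commute)
  qed
  have conv: "upd f0 f1 p 0 r \<in> {0..1}" if "p \<in> {0..1}" "r \<in> {0..1}" for p r
  proof -
    have "(0::real,r) \<in> {0..1} \<times> {0..(1::real)}" using that by auto
    then have a: "f0 (0,r) \<in> {0..1}" "f1 (0,r) \<in> {0..1}" using range0 range1 by auto
    have "0 \<le> p * f1 (0,r) + (1-p) * f0 (0,r)" using a that by auto
    moreover have "p * f1 (0,r) + (1-p) * f0 (0,r) \<le> p * 1 + (1-p) * 1"
      using a that by (intro add_mono mult_left_mono) auto
    ultimately show ?thesis unfolding upd_def by auto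
  qed
  have part2: "(\<lambda>t. \<bar>fst (aa1_traj f0 f1 p0 q0 t) - snd (aa1_traj f0 f1 p0 q0 t)\<bar>) \<longlonglongrightarrow> 0"
    if h: "p0 \<in> {0..1}" "q0 \<in> {0..1}" for p0 q0
  proof -
    have inv: "fst (aa1_traj f0 f1 p0 q0 t) \<in> {0..1} \<and> snd (aa1_traj f0 f1 p0 q0 t) \<in> {0..1}
       \<and> \<bar>fst (aa1_traj f0 f1 p0 q0 t) - snd (aa1_traj f0 f1 p0 q0 t)\<bar> \<le> ?L ^ t" for t
    proof (induction t)
      case 0 then show ?case using h by auto
    next
      case (Suc t)
      obtain p q where pq: "aa1_traj f0 f1 p0 q0 t = (p, q)" by fastforce
      have pi: "p \<in> {0..1}" "q \<in> {0..1}" and d: "\<bar>p - q\<bar> \<le> ?L ^ t" using Suc pq by auto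
      have "fA f0 f1 p q \<in> {0..1}" unfolding fA_def using conv[OF pi(1) rate_in[OF pi]] .
      moreover have "fB f0 f1 p q \<in> {0..1}" unfolding fB_def using conv[OF pi(2) rate_in[OF pi]] .
      moreover have "\<bar>fA f0 f1 p q - fB f0 f1 p q\<bar> \<le> ?L ^ Suc t"
      proof -
        have "\<bar>fA f0 f1 p q - fB f0 f1 p q\<bar> \<le> ?L * \<bar>p - q\<bar>" using part1[OF pi] .
        also have "\<dots> \<le> ?L * ?L ^ t" using d L0 by (simp add: mult_left_mono)
        finally show ?thesis by simp
      qed
      ultimately show ?case using pq by simp
    qed
    have "(\<lambda>t. ?L ^ t) \<longlonglongrightarrow> 0" using L0 L by (intro LIMSEQ_realpow_zero) auto
    then show ?thesis
      by (rule Lim_null_comparison[rotated]) (use inv in auto)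
  qed
  show ?thesis using part1 part2 by blast
qed

end
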